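(* For every $k\ge 1$, letting $n=t_k=\frac{k(k+1)}{2}$ and $K_n$ the complete graph of order $n$, we have ${\rm I}_e(K_n)=|E(K_n)|-\frac{k(k+1)(k-1)(3k+2)}{24}$.
   Context: All graphs are finite and simple. A graph is locally irregular if no two adjacent vertices have the same degree. An edge-irregulator of a graph $G$ is a set $S\subseteq E(G)$ such that $G-S$ is locally irregular; ${\rm I}_e(G)$ is the minimum cardinality of an edge-irregulator of $G$. $t_k$ denotes the $k$-th triangular number $1+2+\dots+k$. *)

theory Defs
  imports Main
begin

text \<open>Graphs are represented by their edge set (a set of 2-element sets).\<close>

definition degree :: "'a set set \<Rightarrow> 'a \<Rightarrow> nat" where
  "degree E v = card {e \<in> E. v \<in> e}"

definition locally_irregular :: "'a set set \<Rightarrow> bool" where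
  "locally_irregular E \<longleftrightarrow> (\<forall>u v. {u, v} \<in> E \<longrightarrow> u \<noteq> v \<longrightarrow> degree E u \<noteq> degree E v)"

text \<open>Edge-irregulator: S \<subseteq> E such that G - S is locally irregular
(removing edges does not change the vertex set, and degrees only depend on edges).\<close>
definition edge_irregulator :: "'a set set \<Rightarrow> 'a set set \<Rightarrow> bool" where
  "edge_irregulator E S \<longleftrightarrow> S \<subseteq> E \<and> locally_irregular (E - S)"

definition irr_e :: "'a set set \<Rightarrow> nat" where
  "irr_e E = Min (card ` {S. edge_irregulator E S})"

definition complete_graph_edges :: "nat \<Rightarrow> nat set set" where
  "complete_graph_edges n = {{u, v} | u v. u < n \<and> v < n \<and> u \<noteq> v}"

definition triangular :: "nat \<Rightarrow> nat" where
  "triangular k = (\<Sum>i=1..k. i)"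

end

theory Submission
  imports Defs
begin

lemma fin_E: "finite (complete_graph_edges n)"
proof -
  have "complete_graph_edges n \<subseteq> Pow {..<n}"
    unfolding complete_graph_edges_def by auto
  then show ?thesis by (meson finite_Pow_iff finite_lessThan finite_subset)
qed

lemma degree_nbrs:
  assumes H: "H \<subseteq> complete_graph_edges n" and v: "v < n"
  shows "degree H v = card {u. u < n \<and> u \<noteq> v \<and> {v, u} \<in> H}"
proof -
  let ?N = "{u. u < n \<and> u \<noteq> v \<and> {v, u} \<in> H}"
  have "bij_betw (\<lambda>u. {v, u}) ?N {e \<in> H. v \<in> e}"
  proof (rule bij_betwI')
    fix x y assume "x \<in> ?N" "y \<in> ?N"
    then show "({v, x} = {v, y}) = (x = y)" by (auto simp: doubleton_eq_iff)
  next
    fix x assume "x \<in> ?N" then show "{v, x} \<in> {e \<in> H. v \<in> e}" by auto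
  next
    fix e assume e: "e \<in> {e \<in> H. v \<in> e}"
    then obtain a b where ab: "e = {a, b}" "a < n" "b < n" "a \<noteq> b"
      using H unfolding complete_graph_edges_def by blast
    show "\<exists>x\<in>?N. e = {v, x}"
    proof (cases "a = v")
      case True then show ?thesis using e ab by (intro bexI[of _ b]) auto
    next
      case False then have "b = v" using e ab by auto
      then show ?thesis using e ab by (intro bexI[of _ a]) (auto simp: insert_commute)
    qed
  qed
  then show ?thesis unfolding degree_def by (simp add: bij_betw_same_card)
qed

lemma handshake:
  assumes H: "H \<subseteq> complete_graph_edges n"
  shows "(\<Sum>v<n. degree H v) = 2 * card H"
proof -
  have fH: "finite H" using H fin_E finite_subset by blast
  have "(\<Sum>v<n. degree H v) = (\<Sum>v<n. \<Sum>e\<in>H. if v \<in> e then 1 else 0)"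
    unfolding degree_def by (simp add: sum.inter_filter[OF fH, symmetric])
  also have "\<dots> = (\<Sum>e\<in>H. \<Sum>v<n. if v \<in> e then 1 else 0)"
    by (rule sum.swap)
  also have "\<dots> = (\<Sum>e\<in>H. 2)"
  proof (rule sum.cong[OF refl])
    fix e assume "e \<in> H"
    then obtain a b where ab: "e = {a, b}" "a < n" "b < n" "a \<noteq> b"
      using H unfolding complete_graph_edges_def by blast
    have "(\<Sum>v<n. if v \<in> e then 1 else 0) = card {v \<in> {..<n}. v \<in> e}"
      by (simp add: sum.inter_filter[symmetric])
    also have "{v \<in> {..<n}. v \<in> e} = {a, b}" using ab by auto
    finally show "(\<Sum>v<n. if v \<in> e then 1 else (0::nat)) = 2" using ab by simp
  qed
  finally show ?thesis by simp
qed

lemma layer_cake: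
  fixes f :: "'a \<Rightarrow> nat"
  assumes fin: "finite V" and cV: "card V = triangular k"
    and cnt: "\<And>j. card {v \<in> V. f v \<le> j} \<le> triangular j"
  shows "(\<Sum>i=1..k. i * i) \<le> (\<Sum>v\<in>V. f v)"
proof -
  have tS: "triangular (Suc j) = triangular j + Suc j" for j
    unfolding triangular_def by simp
  have id: "(\<Sum>i=1..m. i * i) + (\<Sum>j<m. triangular j) = m * triangular m" for m
  proof (induction m)
    case 0 then show ?case by (simp add: triangular_def)
  next
    case (Suc m) then show ?case by (simp add: tS algebra_simps)
  qed
  have part: "card {v \<in> V. j < f v} + card {v \<in> V. f v \<le> j} = card V" for j
  proof -
    have "card {v \<in> V. j < f v} + card {v \<in> V. f v \<le> j}
        = card ({v \<in> V. j < f v} \<union> {v \<in> V. f v \<le> j})"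
      by (rule card_Un_disjoint[symmetric]) (use fin in auto)
    also have "{v \<in> V. j < f v} \<union> {v \<in> V. f v \<le> j} = V" by auto
    finally show ?thesis .
  qed
  have "(\<Sum>j<k. card {v \<in> V. j < f v}) + (\<Sum>j<k. card {v \<in> V. f v \<le> j}) = k * triangular k"
    by (simp add: sum.distrib[symmetric] part cV)
  moreover have "(\<Sum>j<k. card {v \<in> V. f v \<le> j}) \<le> (\<Sum>j<k. triangular j)"
    by (rule sum_mono) (rule cnt)
  ultimately have A: "(\<Sum>i=1..k. i * i) \<le> (\<Sum>j<k. card {v \<in> V. j < f v})"
    using id[of k] by linarith
  have "(\<Sum>j<k. card {v \<in> V. j < f v}) = (\<Sum>j<k. \<Sum>v\<in>V. if j < f v then 1 else 0)"
    using fin by (simp add: sum.inter_filter[symmetric])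
  also have "\<dots> = (\<Sum>v\<in>V. \<Sum>j<k. if j < f v then 1 else 0)"
    by (rule sum.swap)
  also have "\<dots> = (\<Sum>v\<in>V. card {j \<in> {..<k}. j < f v})"
    by (simp add: sum.inter_filter[symmetric])
  also have "\<dots> \<le> (\<Sum>v\<in>V. f v)"
  proof (rule sum_mono)
    fix v show "card {j \<in> {..<k}. j < f v} \<le> f v"
      using card_mono[of "{..<f v}" "{j \<in> {..<k}. j < f v}"] by auto
  qed
  finally show ?thesis using A by linarith
qed


lemma upper:
  assumes H: "H \<subseteq> complete_graph_edges n" and n: "n = triangular k"
    and irr: "locally_irregular H"
  shows "2 * card H + (\<Sum>i=1..k. i * i) \<le> n * n"
proof -
  define d where "d v = degree H v" for v
  define C where "C v = {u. u < n \<and> d u = d v}" for v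
  define s where "s v = n - d v" for v
  have dC: "d v + card (C v) \<le> n" if v: "v < n" for v
  proof -
    let ?N = "{u. u < n \<and> u \<noteq> v \<and> {v, u} \<in> H}"
    have "d v = card ?N" unfolding d_def by (rule degree_nbrs[OF H v])
    moreover have "?N \<inter> C v = {}"
      using irr unfolding locally_irregular_def C_def d_def by (auto; metis)
    moreover have "?N \<union> C v \<subseteq> {..<n}" unfolding C_def by auto
    ultimately have "d v + card (C v) = card (?N \<union> C v)"
      by (simp add: card_Un_disjoint C_def)
    also have "\<dots> \<le> n" using card_mono[OF _ \<open>?N \<union> C v \<subseteq> {..<n}\<close>] by simp
    finally show ?thesis .
  qed
  have C1: "1 \<le> card (C v)" if "v < n" for v
  proof -
    have "finite (C v)" unfolding C_def by simp
    moreover have "v \<in> C v" using that unfolding C_def by simp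
    ultimately show ?thesis by (metis One_nat_def Suc_leI card_gt_0_iff empty_iff)
  qed
  have sC: "card (C v) \<le> s v" if "v < n" for v using dC[OF that] unfolding s_def by linarith
  have cnt: "card {v \<in> {..<n}. s v \<le> j} \<le> triangular j" for j
  proof (induction j)
    case 0
    have "{v \<in> {..<n}. s v \<le> 0} = {}" using C1 sC by fastforce
    then show ?case by (simp only: card.empty)
  next
    case (Suc j)
    have eq: "{v \<in> {..<n}. s v \<le> Suc j} = {v \<in> {..<n}. s v \<le> j} \<union> {v \<in> {..<n}. s v = Suc j}"
      by auto
    have B: "card {v \<in> {..<n}. s v = Suc j} \<le> Suc j"
    proof (cases "{v \<in> {..<n}. s v = Suc j} = {}")
      case True then show ?thesis by (metis card.empty zero_le)
    next
      case False
      then obtain w where w: "w < n" "s w = Suc j" by auto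
      have "{v \<in> {..<n}. s v = Suc j} = C w"
      proof
        show "{v \<in> {..<n}. s v = Suc j} \<subseteq> C w"
        proof
          fix v assume "v \<in> {v \<in> {..<n}. s v = Suc j}"
          then have "v < n" "s v = s w" using w by auto
          moreover have "d v \<le> n" "d w \<le> n" using dC[OF \<open>v < n\<close>] dC[OF w(1)] by auto
          ultimately show "v \<in> C w" unfolding C_def s_def by auto
        qed
      next
        show "C w \<subseteq> {v \<in> {..<n}. s v = Suc j}" using w unfolding C_def s_def by auto
      qed
      then show ?thesis using sC[OF w(1)] w by simp
    qed
    have "card {v \<in> {..<n}. s v \<le> Suc j} \<le> card {v \<in> {..<n}. s v \<le> j} + card {v \<in> {..<n}. s v = Suc j}"
      unfolding eq by (rule card_Un_le)
    also have "\<dots> \<le> triangular j + Suc j" using Suc.IH B by linarith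
    also have "\<dots> = triangular (Suc j)" unfolding triangular_def by simp
    finally show ?case .
  qed
  have LC: "(\<Sum>i=1..k. i * i) \<le> (\<Sum>v<n. s v)"
    using layer_cake[of "{..<n}" k s] cnt n by simp
  have "(\<Sum>v<n. d v) + (\<Sum>v<n. s v) = (\<Sum>v<n. n)"
    unfolding sum.distrib[symmetric]
  proof (rule sum.cong[OF refl])
    fix v assume "v \<in> {..<n}" then show "d v + s v = n" using dC[of v] unfolding s_def by auto
  qed
  moreover have "(\<Sum>v<n. d v) = 2 * card H" unfolding d_def by (rule handshake[OF H])
  ultimately show ?thesis using LC by simp
qed


lemma construction:
  assumes n: "n = triangular k"
  shows "\<exists>H0. H0 \<subseteq> complete_graph_edges n \<and> locally_irregular H0 \<and>
              2 * card H0 + (\<Sum>i=1..k. i * i) = n * n"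
proof -
  define P where "P = Sigma {1..k} (\<lambda>i. {..<i::nat})"
  have fP: "finite P" unfolding P_def by simp
  have cP: "card P = n" unfolding P_def n triangular_def by (simp add: card_SigmaI)
  obtain g where g: "bij_betw g {..<n} P"
    using finite_same_card_bij[of "{..<n}" P] fP cP by auto
  define p where "p v = fst (g v)" for v
  have cls: "card {u \<in> {..<n}. p u = i} = i" if "i \<in> {1..k}" for i
  proof -
    have inj: "inj_on g {u \<in> {..<n}. p u = i}"
      using g unfolding bij_betw_def by (auto intro: inj_on_subset)
    have "g ` {u \<in> {..<n}. p u = i} = {b \<in> P. fst b = i}"
      using g unfolding p_def bij_betw_def by auto
    also have "{b \<in> P. fst b = i} = {i} \<times> {..<i}" using that unfolding P_def by auto
    finally show ?thesis using card_image[OF inj] by simp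
  qed
  have prange: "p v \<in> {1..k}" if "v < n" for v
  proof -
    have "g v \<in> P" using g that unfolding bij_betw_def by auto
    then show ?thesis unfolding p_def P_def by auto
  qed
  have ple: "p v \<le> n" if "v < n" for v
  proof -
    have "card {u \<in> {..<n}. p u = p v} \<le> n"
      using card_mono[of "{..<n}" "{u \<in> {..<n}. p u = p v}"] by auto
    then show ?thesis using cls[OF prange[OF that]] by simp
  qed
  define H0 where "H0 = {{u, v} | u v. u < n \<and> v < n \<and> p u \<noteq> p v}"
  have sub: "H0 \<subseteq> complete_graph_edges n"
    unfolding H0_def complete_graph_edges_def by blast
  have mem: "{v, u} \<in> H0 \<longleftrightarrow> p u \<noteq> p v" if "u < n" "v < n" for u v
  proof
    assume "{v, u} \<in> H0"
    then obtain a b where "{v, u} = {a, b}" "p a \<noteq> p b" unfolding H0_def by blast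
    then show "p u \<noteq> p v" by (auto simp: doubleton_eq_iff)
  next
    assume "p u \<noteq> p v" then show "{v, u} \<in> H0" using that unfolding H0_def by blast
  qed
  have deg: "degree H0 v = n - p v" if v: "v < n" for v
  proof -
    have "degree H0 v = card {u. u < n \<and> u \<noteq> v \<and> {v, u} \<in> H0}"
      by (rule degree_nbrs[OF sub v])
    also have "{u. u < n \<and> u \<noteq> v \<and> {v, u} \<in> H0} = {..<n} - {u \<in> {..<n}. p u = p v}"
      using mem v by auto
    also have "card \<dots> = n - card {u \<in> {..<n}. p u = p v}"
      using card_Diff_subset[of "{u \<in> {..<n}. p u = p v}" "{..<n}"] by auto
    also have "\<dots> = n - p v" using cls[OF prange[OF v]] by (simp only:)
    finally show ?thesis .
  qed
  have irr: "locally_irregular H0"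
    unfolding locally_irregular_def
  proof (intro allI impI)
    fix u v assume uv: "{u, v} \<in> H0" "u \<noteq> v"
    then have "u < n" "v < n" using sub unfolding complete_graph_edges_def
      by (auto simp: doubleton_eq_iff)
    moreover have "p u \<noteq> p v" using mem[of v u] uv calculation by (simp add: insert_commute)
    ultimately show "degree H0 u \<noteq> degree H0 v"
      using deg[of u] deg[of v] ple[of u] ple[of v] by simp
  qed
  have sp: "(\<Sum>v<n. p v) = (\<Sum>i=1..k. i * i)"
  proof -
    have "(\<Sum>v<n. p v) = (\<Sum>b\<in>P. fst b)"
      unfolding p_def by (rule sum.reindex_bij_betw[OF g])
    also have "\<dots> = (\<Sum>i\<in>{1..k}. \<Sum>j<i. i)" unfolding P_def
      using sum.Sigma[of "{1..k}" "\<lambda>i. {..<i}" "\<lambda>i j. i"] by (simp add: case_prod_beta')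
    also have "\<dots> = (\<Sum>i=1..k. i * i)" by simp
    finally show ?thesis .
  qed
  have "(\<Sum>v<n. degree H0 v) + (\<Sum>v<n. p v) = (\<Sum>v<n. n)"
    unfolding sum.distrib[symmetric]
    by (rule sum.cong[OF refl]) (use deg ple in auto)
  then have "2 * card H0 + (\<Sum>i=1..k. i * i) = n * n"
    using handshake[OF sub] sp by simp
  then show ?thesis using sub irr by blast
qed


lemma tri2: "2 * triangular k = k * (k + 1)"
proof (induction k)
  case 0 then show ?case by (simp add: triangular_def)
next
  case (Suc k)
  have "triangular (Suc k) = triangular k + Suc k" unfolding triangular_def by simp
  then show ?case using Suc by simp
qed

lemma sq6: "6 * (\<Sum>i=1..k. i * i) = (k::nat) * (k + 1) * (2 * k + 1)"
  by (induction k) (auto simp: algebra_simps)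

lemma arith_id:
  assumes "k \<ge> 1" and "2 * M + (\<Sum>i=1..k. i * i) = triangular k * triangular k"
  shows "M = k * (k + 1) * (k - 1) * (3 * k + 2) div 24"
proof -
  obtain m where m: "k = Suc m" using assms(1) by (cases k) auto
  have a: "int (2 * triangular k) = int (k * (k + 1))" using tri2 by metis
  have b: "int (6 * (\<Sum>i=1..k. i * i)) = int (k * (k + 1) * (2 * k + 1))" using sq6 by metis
  have c: "int (2 * M + (\<Sum>i=1..k. i * i)) = int (triangular k * triangular k)"
    using assms(2) by metis
  define T where "T = int (triangular k)"
  define Q where "Q = int (\<Sum>i=1..k. i * i)"
  have a': "2 * T = int k * (int k + 1)" using a unfolding T_def by (simp add: algebra_simps)
  have b': "6 * Q = int k * (int k + 1) * (2 * int k + 1)" using b unfolding Q_def by (simp add: algebra_simps)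
  have c': "2 * int M + Q = T * T" using c unfolding T_def Q_def by simp
  have "24 * int M = 3 * (2 * T) * (2 * T) - 2 * (6 * Q)" using c' by algebra
  also have "\<dots> = int k * (int k + 1) * (int k - 1) * (3 * int k + 2)"
    unfolding a' b' by algebra
  also have "\<dots> = int (k * (k + 1) * (k - 1) * (3 * k + 2))"
  proof -
    have d: "int (k - 1) = int k - 1" using assms(1) by simp
    have "int (k * (k + 1) * (k - 1) * (3 * k + 2)) = int k * (int k + 1) * int (k - 1) * (3 * int k + 2)"
      by (simp only: of_nat_mult of_nat_add of_nat_1 of_nat_numeral)
    then show ?thesis unfolding d by simp
  qed
  finally have "int (24 * M) = int (k * (k + 1) * (k - 1) * (3 * k + 2))" by simp
  then have "24 * M = k * (k + 1) * (k - 1) * (3 * k + 2)" by (simp only: of_nat_eq_iff)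
  then show ?thesis by simp
qed

theorem theorem10:
  fixes k :: nat
  assumes "k \<ge> 1"
  shows "int (irr_e (complete_graph_edges (triangular k))) =
         int (card (complete_graph_edges (triangular k)))
         - int (k * (k + 1) * (k - 1) * (3 * k + 2) div 24)"
proof -
  define n where "n = triangular k"
  define E where "E = complete_graph_edges n"
  define Q where "Q = (\<Sum>i=1..k. i * i)"
  obtain H0 where H0: "H0 \<subseteq> E" "locally_irregular H0" "2 * card H0 + Q = n * n"
    using construction[of n k] unfolding n_def E_def Q_def by auto
  have fE: "finite E" unfolding E_def by (rule fin_E)
  have M: "card H0 = k * (k + 1) * (k - 1) * (3 * k + 2) div 24"
    using arith_id[OF assms, of "card H0"] H0(3) unfolding n_def Q_def by simp
  have le: "card H0 \<le> card E" using card_mono[OF fE H0(1)] .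
  have irr: "irr_e E = card E - card H0"
    unfolding irr_e_def
  proof (rule Min_eqI)
    have "{S. edge_irregulator E S} \<subseteq> Pow E" unfolding edge_irregulator_def by auto
    then show "finite (card ` {S. edge_irregulator E S})"
      using fE by (meson finite_Pow_iff finite_imageI finite_subset)
  next
    fix c assume "c \<in> card ` {S. edge_irregulator E S}"
    then obtain S where S: "S \<subseteq> E" "locally_irregular (E - S)" "c = card S"
      unfolding edge_irregulator_def by auto
    have "2 * card (E - S) + Q \<le> n * n"
      using upper[of "E - S" n k] S unfolding E_def n_def Q_def by auto
    then have "card (E - S) \<le> card H0" using H0(3) by linarith
    moreover have "card (E - S) = card E - card S" using card_Diff_subset[OF finite_subset[OF S(1) fE] S(1)] .
    moreover have "card S \<le> card E" using card_mono[OF fE S(1)] .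
    ultimately show "card E - card H0 \<le> c" using S(3) by linarith
  next
    have "edge_irregulator E (E - H0)" unfolding edge_irregulator_def
      using H0 by (simp add: double_diff)
    moreover have "card (E - H0) = card E - card H0"
      using card_Diff_subset[OF finite_subset[OF H0(1) fE] H0(1)] .
    ultimately show "card E - card H0 \<in> card ` {S. edge_irregulator E S}" by force
  qed
  show ?thesis using irr le M unfolding E_def n_def by (simp add: of_nat_diff)
qed

end
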